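(* Let $d,j$ be integers with $0<j<d$. Let $\lambda_1,\dots,\lambda_t$ be the elements of $\mathscr{P}_{3,d-1}(j)$ and $\mu_1,\dots,\mu_s$ the elements of $\mathscr{P}_{3,d-1}(j-1)$, and define the $s\times t$ matrix $C=(C_{pq})$ by $E([x^{\lambda_q}])=\sum_{p=1}^{s} C_{pq}[x^{\mu_p}]$. Then $\operatorname{rank} C = s = p_{3,d-1}(j-1)$.
   Context: $\Bbbk$ is an algebraically closed field of characteristic $0$. For an integer $d\ge 1$, $A(d)=\Bbbk[x_1,x_2,x_3]/(x_1^d,x_2^d,x_3^d)=\bigoplus_j A(d)_j$ with its standard grading; the monomials $x_1^{a_1}x_2^{a_2}x_3^{a_3}$ with $0\le a_i\le d-1$ form a basis. The linear map $E:A(d)_{j+1}\to A(d)_j$ is defined on monomials by $E(x_1^{a_1}x_2^{a_2}x_3^{a_3})=\sum_{k=1}^{3} a_k(d-a_k)\,x_1^{a_1}\cdots x_k^{a_k-1}\cdots x_3^{a_3}$ (terms with $a_k=0$ vanish). For integers $l\ge 0$ and $n$, $\mathscr{P}_{3,l}(n)$ is the set of integer triples $(a,b,c)$ with $l\ge a\ge b\ge c\ge 0$, $a+b+c=n$, and $p_{3,l}(n)=|\mathscr{P}_{3,l}(n)|$ (so $p_{3,l}(n)=0$ for $n<0$). For $\lambda=(a,b,c)$, $[x^\lambda]$ denotes the sum of the distinct monomials in the orbit of $x_1^ax_2^bx_3^c$ under the action of $S_3$ permuting the variables. *)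

theory Defs
  imports "HOL-Computational_Algebra.Polynomial" "Jordan_Normal_Form.DL_Rank"
begin

text \<open>Elements of A(d) = k[x1,x2,x3]/(x1^d,x2^d,x3^d) are represented by their
coefficient functions on exponent triples (a1,a2,a3); the basis monomials are
those with all a_i < d.\<close>

definition basis_exps :: "nat \<Rightarrow> (nat \<times> nat \<times> nat) set" where
  "basis_exps d = {(a1,a2,a3). a1 < d \<and> a2 < d \<and> a3 < d}"

definition E_mon :: "nat \<Rightarrow> nat \<times> nat \<times> nat \<Rightarrow> nat \<times> nat \<times> nat \<Rightarrow> 'a::field" where
  "E_mon d e = (case e of (a1,a2,a3) \<Rightarrow> (\<lambda>m.
      (if 0 < a1 \<and> m = (a1 - 1, a2, a3) then of_nat (a1 * (d - a1)) else 0)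
    + (if 0 < a2 \<and> m = (a1, a2 - 1, a3) then of_nat (a2 * (d - a2)) else 0)
    + (if 0 < a3 \<and> m = (a1, a2, a3 - 1) then of_nat (a3 * (d - a3)) else 0)))"

definition E_map :: "nat \<Rightarrow> (nat \<times> nat \<times> nat \<Rightarrow> 'a::field) \<Rightarrow> nat \<times> nat \<times> nat \<Rightarrow> 'a" where
  "E_map d f = (\<lambda>m. \<Sum>e\<in>basis_exps d. f e * E_mon d e m)"

definition P3 :: "nat \<Rightarrow> nat \<Rightarrow> (nat \<times> nat \<times> nat) set" where
  "P3 l n = {(a,b,c). l \<ge> a \<and> a \<ge> b \<and> b \<ge> c \<and> a + b + c = n}"

definition p3 :: "nat \<Rightarrow> nat \<Rightarrow> nat" where
  "p3 l n = card (P3 l n)"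

definition orbit3 :: "nat \<times> nat \<times> nat \<Rightarrow> (nat \<times> nat \<times> nat) set" where
  "orbit3 e = (case e of (a,b,c) \<Rightarrow>
     {(a,b,c), (a,c,b), (b,a,c), (b,c,a), (c,a,b), (c,b,a)})"

definition orbit_sum :: "nat \<times> nat \<times> nat \<Rightarrow> nat \<times> nat \<times> nat \<Rightarrow> 'a::field" where
  "orbit_sum e = (\<lambda>m. if m \<in> orbit3 e then 1 else 0)"

end

theory Submission imports Defs begin

lemma rank_le_rows:
  fixes C :: "'a::field mat"
  assumes "C \<in> carrier_mat n nc"
  shows "vec_space.rank n C \<le> n"
proof -
  interpret vec_space "TYPE('a)" n .
  have s: "set (cols C) \<subseteq> carrier_vec n" using assms cols_dim by blast
  have "subspace class_ring (span (set (cols C))) V" using span_is_subspace[OF s] by simp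
  moreover have "vectorspace.fin_dim class_ring (vs (span (set (cols C))))"
    using fin_dim_span_cols[OF assms] .
  ultimately have "vectorspace.dim class_ring (vs (span (set (cols C)))) \<le> dim"
    using subspace_dim by auto
  then show ?thesis unfolding rank_def dim_is_n .
qed

lemma rank_ge_rows:
  fixes C :: "'a::field mat"
  assumes C: "C \<in> carrier_mat n nc"
    and f: "\<And>k. k < n \<Longrightarrow> f k < nc"
    and inj: "\<And>v. (\<And>k. k < n \<Longrightarrow> (\<Sum>i<n. C $$ (i, f k) * v i) = 0) \<Longrightarrow> \<forall>i<n. v i = 0"
  shows "n \<le> vec_space.rank n C"
proof -
  interpret vec_space "TYPE('a)" n .
  define B where "B = mat n n (\<lambda>(i,k). C $$ (i, f k))"
  have B: "B \<in> carrier_mat n n" unfolding B_def by simp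
  have BT: "transpose_mat B \<in> carrier_mat n n" using B by simp
  have "det (transpose_mat B) \<noteq> 0"
  proof
    assume "det (transpose_mat B) = 0"
    then obtain v where v: "v \<in> carrier_vec n" "v \<noteq> 0\<^sub>v n" "transpose_mat B *\<^sub>v v = 0\<^sub>v n"
      using det_0_iff_vec_prod_zero_field[OF BT] by blast
    have "\<forall>i<n. v $ i = 0"
    proof (rule inj)
      fix k assume k: "k < n"
      have "(transpose_mat B *\<^sub>v v) $ k = 0" using v k by simp
      moreover have "(transpose_mat B *\<^sub>v v) $ k = (\<Sum>i<n. C $$ (i, f k) * v $ i)"
        using k v(1) B unfolding B_def
        by (auto simp: scalar_prod_def lessThan_atLeast0 intro!: sum.cong)
      ultimately show "(\<Sum>i<n. C $$ (i, f k) * v $ i) = 0" by simp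
    qed
    then have "v = 0\<^sub>v n" using v(1) by (intro eq_vecI) auto
    with v(2) show False by simp
  qed
  then have "det B \<noteq> 0" using det_transpose[OF B] by simp
  then have rB: "rank B = n" using det_rank_iff[OF B] by simp
  have dB: "distinct (cols B)" using non_distinct_low_rank[OF B] rB by auto
  have li: "lin_indpt (set (cols B))" using full_rank_lin_indpt[OF B rB dB] .
  have sub: "set (cols B) \<subseteq> set (cols C)"
  proof
    fix c assume "c \<in> set (cols B)"
    then obtain k where k: "k < n" "c = col B k" using B by (auto simp: in_set_conv_nth)
    have "col B k = col C (f k)" using k(1) C f[OF k(1)] unfolding B_def by (auto intro!: eq_vecI)
    then show "c \<in> set (cols C)" using k f[OF k(1)] C by (auto simp: in_set_conv_nth)
  qed
  have "card (set (cols B)) = n" using distinct_card[OF dB] B by simp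
  then show ?thesis using rank_ge_card_indpt[OF C sub li] by simp
qed

definition En :: "nat \<Rightarrow> nat \<times> nat \<times> nat \<Rightarrow> nat \<times> nat \<times> nat \<Rightarrow> nat" where
  "En d e = (case e of (a1,a2,a3) \<Rightarrow> (\<lambda>m.
      (if 0 < a1 \<and> m = (a1 - 1, a2, a3) then a1 * (d - a1) else 0)
    + (if 0 < a2 \<and> m = (a1, a2 - 1, a3) then a2 * (d - a2) else 0)
    + (if 0 < a3 \<and> m = (a1, a2, a3 - 1) then a3 * (d - a3) else 0)))"

lemma E_mon_En: "E_mon d e m = of_nat (En d e m)"
  by (cases e) (simp only: E_mon_def En_def prod.case of_nat_add if_distrib[of of_nat] of_nat_0)

lemma finite_basis_exps: "finite (basis_exps d)"
proof -
  have "basis_exps d \<subseteq> {..<d} \<times> {..<d} \<times> {..<d}" by (auto simp: basis_exps_def)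
  then show ?thesis by (rule finite_subset) auto
qed

lemma E_map_orbit:
  "(E_map d (orbit_sum lam) mu :: 'a::field)
     = of_nat (\<Sum>e\<in>basis_exps d. if e \<in> orbit3 lam then En d e mu else 0)"
  unfolding E_map_def orbit_sum_def E_mon_En of_nat_sum
  by (rule sum.cong) auto

definition srt :: "nat \<times> nat \<times> nat \<Rightarrow> bool" where
  "srt x = (case x of (a,b,c) \<Rightarrow> b \<le> a \<and> c \<le> b)"

lemma orbit_srt_eq: "srt x \<Longrightarrow> srt y \<Longrightarrow> x \<in> orbit3 y \<Longrightarrow> x = y"
  by (cases x; cases y) (auto simp: srt_def orbit3_def)

lemma diag_pos:
  assumes "b \<le> a" "c \<le> b" "a + 1 < d"
  shows "(\<Sum>e\<in>basis_exps d. if e \<in> orbit3 (a+1,b,c) then En d e (a,b,c) else 0) \<noteq> 0"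
proof -
  have m: "(a+1,b,c) \<in> basis_exps d" using assms by (auto simp: basis_exps_def)
  have "En d (a+1,b,c) (a,b,c) \<noteq> 0" using assms by (simp add: En_def)
  then show ?thesis using m finite_basis_exps
    by (subst sum_eq_0_iff) (auto intro!: bexI[of _ "(a+1,b,c)"] simp: orbit3_def)
qed

lemma offdiag_zero_aux:
  assumes "b \<le> a" "c \<le> b" "srt m" "fst m \<le> a" "e \<in> orbit3 (a+1,b,c)" "En d e m \<noteq> 0"
  shows "m = (a,b,c)"
  using assms by (cases m) (auto simp: srt_def orbit3_def En_def split: if_splits)

lemma offdiag_zero:
  assumes "b \<le> a" "c \<le> b" "srt m" "fst m \<le> a" "m \<noteq> (a,b,c)"
  shows "(\<Sum>e\<in>basis_exps d. if e \<in> orbit3 (a+1,b,c) then En d e m else 0) = 0"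
  using offdiag_zero_aux[OF assms(1-4)] assms(5) by (intro sum.neutral) auto


theorem lemma3p2:
  fixes d j :: nat
    and lams mus :: "(nat \<times> nat \<times> nat) list"
    and C :: "'a :: {alg_closed_field, field_char_0} mat"
  assumes "0 < j" and "j < d"
    and "distinct lams" and "set lams = P3 (d - 1) j"
    and "distinct mus" and "set mus = P3 (d - 1) (j - 1)"
    and "C \<in> carrier_mat (length mus) (length lams)"
    and "\<forall>q < length lams.
           E_map d (orbit_sum (lams ! q))
             = (\<lambda>m. \<Sum>p < length mus. C $$ (p, q) * orbit_sum (mus ! p) m)"
  shows "vec_space.rank (length mus) C = length mus
         \<and> length mus = p3 (d - 1) (j - 1)"
proof -
  note dl = assms(3) and ll = assms(4) and dm = assms(5) and lm = assms(6)
  define s where "s = length mus"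
  define t where "t = length lams"
  define N where "N lam mu = (\<Sum>e\<in>basis_exps d. if e \<in> orbit3 lam then En d e mu else 0)" for lam mu
  have srt_mu: "srt (mus ! p)" if "p < s" for p
  proof -
    have "mus ! p \<in> P3 (d - 1) (j - 1)" using nth_mem[of p mus] that lm s_def by simp
    then show ?thesis by (auto simp: P3_def srt_def)
  qed
  have Cent: "C $$ (p, q) = of_nat (N (lams ! q) (mus ! p))" if p: "p < s" and q: "q < t" for p q
  proof -
    have "E_map d (orbit_sum (lams ! q)) (mus ! p) = (\<Sum>p' < s. C $$ (p', q) * orbit_sum (mus ! p') (mus ! p))"
    proof -
      have "E_map d (orbit_sum (lams ! q)) = (\<lambda>m. \<Sum>p' < s. C $$ (p', q) * orbit_sum (mus ! p') m)"
        using assms(8) q unfolding s_def t_def by blast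
      then show ?thesis by (rule fun_cong)
    qed
    also have "\<dots> = (\<Sum>p' < s. if p' = p then C $$ (p', q) else 0)"
    proof (rule sum.cong)
      fix p' assume "p' \<in> {..<s}"
      then have p': "p' < s" by simp
      have "mus ! p \<in> orbit3 (mus ! p') \<longleftrightarrow> p' = p"
      proof
        assume "mus ! p \<in> orbit3 (mus ! p')"
        then have "mus ! p = mus ! p'" using orbit_srt_eq srt_mu p p' by blast
        then show "p' = p" using nth_eq_iff_index_eq[OF dm] p p' s_def by simp
      next
        assume "p' = p" then show "mus ! p \<in> orbit3 (mus ! p')"
          by (cases "mus ! p") (auto simp: orbit3_def)
      qed
      then show "C $$ (p', q) * orbit_sum (mus ! p') (mus ! p) = (if p' = p then C $$ (p', q) else 0)"
        by (auto simp: orbit_sum_def)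
    qed simp
    also have "\<dots> = C $$ (p, q)" using p by simp
    finally have eq: "E_map d (orbit_sum (lams ! q)) (mus ! p) = C $$ (p, q)" .
    show ?thesis unfolding N_def using trans[OF sym[OF eq] E_map_orbit[of d "lams ! q" "mus ! p"]] .
  qed
  have fex: "\<exists>q < t. lams ! q = (fst (mus ! p) + 1, snd (mus ! p))" if p: "p < s" for p
  proof -
    obtain a b c where abc: "mus ! p = (a,b,c)" by (cases "mus ! p") auto
    have "mus ! p \<in> P3 (d - 1) (j - 1)" using nth_mem[of p mus] p lm s_def by simp
    then have "(a+1,b,c) \<in> P3 (d - 1) j" using abc assms(1,2) by (auto simp: P3_def)
    then have "(a+1,b,c) \<in> set lams" using ll by simp
    then show ?thesis using abc t_def by (auto simp: in_set_conv_nth)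
  qed
  define f where "f p = (SOME q. q < t \<and> lams ! q = (fst (mus ! p) + 1, snd (mus ! p)))" for p
  have f: "f p < t \<and> lams ! f p = (fst (mus ! p) + 1, snd (mus ! p))" if "p < s" for p
    unfolding f_def using someI_ex[OF fex[OF that]] .
  have diag: "C $$ (p, f p) \<noteq> 0" if p: "p < s" for p
  proof -
    obtain a b c where abc: "mus ! p = (a,b,c)" by (cases "mus ! p") auto
    have "mus ! p \<in> P3 (d - 1) (j - 1)" using nth_mem[of p mus] p lm s_def by simp
    then have le: "b \<le> a" "c \<le> b" "a + 1 < d" using abc assms(1,2) by (auto simp: P3_def)
    have "N (lams ! f p) (mus ! p) = N (a+1,b,c) (a,b,c)" using f[OF p] abc by simp
    then have "N (lams ! f p) (mus ! p) \<noteq> 0" using diag_pos[OF le] unfolding N_def by simp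
    then show ?thesis using Cent[OF p] f[OF p] by simp
  qed
  have off: "C $$ (i, f p) = 0" if p: "p < s" and i: "i < s" and ne: "i \<noteq> p"
    and le: "fst (mus ! i) \<le> fst (mus ! p)" for i p
  proof -
    obtain a b c where abc: "mus ! p = (a,b,c)" by (cases "mus ! p") auto
    have "mus ! p \<in> P3 (d - 1) (j - 1)" using nth_mem[of p mus] p lm s_def by simp
    then have le2: "b \<le> a" "c \<le> b" using abc by (auto simp: P3_def)
    have "mus ! i \<noteq> mus ! p" using nth_eq_iff_index_eq[OF dm] p i ne s_def by simp
    then have "N (a+1,b,c) (mus ! i) = 0" using offdiag_zero[OF le2 srt_mu[OF i]] le abc
      unfolding N_def by simp
    moreover have "lams ! f p = (a+1,b,c)" using f[OF p] abc by simp
    ultimately have "N (lams ! f p) (mus ! i) = 0" by simp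
    then show ?thesis using Cent[OF i] f[OF p] by simp
  qed
  have inj: "\<forall>i<s. v i = 0" if hv: "\<And>k. k < s \<Longrightarrow> (\<Sum>i<s. C $$ (i, f k) * v i) = 0" for v
  proof (rule ccontr)
    assume "\<not> (\<forall>i<s. v i = 0)"
    then have ne: "{i. i < s \<and> v i \<noteq> 0} \<noteq> {}" by auto
    define S where "S = {i. i < s \<and> v i \<noteq> 0}"
    have fin: "finite S" unfolding S_def by simp
    define M where "M = Max ((\<lambda>i. fst (mus ! i)) ` S)"
    have "M \<in> (\<lambda>i. fst (mus ! i)) ` S" unfolding M_def using fin ne S_def by (intro Max_in) auto
    then obtain k where k: "k \<in> S" "fst (mus ! k) = M" by auto
    have ks: "k < s" "v k \<noteq> 0" using k S_def by auto
    have "(\<Sum>i<s. C $$ (i, f k) * v i) = (\<Sum>i<s. if i = k then C $$ (i, f k) * v i else 0)"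
    proof (rule sum.cong)
      fix i assume "i \<in> {..<s}"
      then have i: "i < s" by simp
      show "C $$ (i, f k) * v i = (if i = k then C $$ (i, f k) * v i else 0)"
      proof (cases "i = k \<or> v i = 0")
        case True then show ?thesis by auto
      next
        case False
        then have "i \<in> S" using i S_def by auto
        then have "fst (mus ! i) \<le> M" unfolding M_def using fin by simp
        then show ?thesis using off[OF ks(1) i] False k(2) by simp
      qed
    qed simp
    also have "\<dots> = C $$ (k, f k) * v k" using ks by simp
    finally have "C $$ (k, f k) * v k = 0" using hv[OF ks(1)] by simp
    then show False using diag[OF ks(1)] ks(2) by simp
  qed
  have C: "C \<in> carrier_mat s t" using assms(7) s_def t_def by simp
  have "s \<le> vec_space.rank s C"
  proof (rule rank_ge_rows[OF C])
    fix k assume "k < s" then show "f k < t" using f by blast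
  next
    fix v :: "nat \<Rightarrow> 'a" assume "\<And>k. k < s \<Longrightarrow> (\<Sum>i<s. C $$ (i, f k) * v i) = 0"
    then show "\<forall>i<s. v i = 0" by (rule inj)
  qed
  moreover have "vec_space.rank s C \<le> s" using rank_le_rows[OF C] .
  moreover have "s = p3 (d - 1) (j - 1)" unfolding p3_def s_def using lm distinct_card[OF dm] by simp
  ultimately show ?thesis unfolding s_def by simp
qed
end
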